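(* Let $R$ be a $K$-algebra with an ideal $J$ such that $J$ and $R/J$ are both locally unit-regular. Then $R$ is locally unit-regular if and only if for every idempotent $e \in R$, every unit of the unital algebra $eRe/eJe$ lifts to a unit of $eRe$ (i.e., is the image of a unit of $eRe$ under the quotient map $eRe \to eRe/eJe$).
   Context: $K$ is a field; algebras are associative, not necessarily unital; ideals are two-sided and $K$-subspaces. For an idempotent $e$, $eRe$ is a unital algebra with identity $e$, and $eJe$ is an ideal of it. A unital ring $S$ is unit-regular if for each $x\in S$ there is a unit $u$ of $S$ with $xux = x$. A $K$-algebra $R$ is locally unit-regular if every finite subset of $R$ is contained in a $K$-subalgebra of $R$ that has its own identity element and is unit-regular. *)

theory Defs
  imports Complex_Main
begin

text \<open>A (not necessarily unital, associative) algebra over a field 'k is modelled as a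
  type of class ring (non-unital ring) together with a scalar multiplication smult
  making it a 'k-vector space, compatible with the ring multiplication.\<close>

definition k_algebra :: "('k::field \<Rightarrow> 'a::ring \<Rightarrow> 'a) \<Rightarrow> bool" where
  "k_algebra smult \<longleftrightarrow> vector_space smult \<and>
     (\<forall>c a b. smult c (a * b) = smult c a * b \<and> smult c (a * b) = a * smult c b)"

definition subalgebra :: "('k::field \<Rightarrow> 'a::ring \<Rightarrow> 'a) \<Rightarrow> 'a set \<Rightarrow> bool" where
  "subalgebra smult S \<longleftrightarrow> module.subspace smult S \<and> (\<forall>x\<in>S. \<forall>y\<in>S. x * y \<in> S)"

definition alg_ideal :: "('k::field \<Rightarrow> 'a::ring \<Rightarrow> 'a) \<Rightarrow> 'a set \<Rightarrow> bool" where
  "alg_ideal smult J \<longleftrightarrow> module.subspace smult J \<and> (\<forall>r. \<forall>x\<in>J. r * x \<in> J \<and> x * r \<in> J)"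

definition is_identity :: "'a::ring set \<Rightarrow> 'a \<Rightarrow> bool" where
  "is_identity S e \<longleftrightarrow> e \<in> S \<and> (\<forall>x\<in>S. e * x = x \<and> x * e = x)"

definition is_unit_in :: "'a::ring set \<Rightarrow> 'a \<Rightarrow> 'a \<Rightarrow> bool" where
  "is_unit_in S e u \<longleftrightarrow> u \<in> S \<and> (\<exists>v\<in>S. u * v = e \<and> v * u = e)"

definition unit_regular_with_identity :: "'a::ring set \<Rightarrow> bool" where
  "unit_regular_with_identity S \<longleftrightarrow>
     (\<exists>e. is_identity S e \<and> (\<forall>x\<in>S. \<exists>u. is_unit_in S e u \<and> x * u * x = x))"

definition locally_unit_regular :: "('k::field \<Rightarrow> 'a::ring \<Rightarrow> 'a) \<Rightarrow> 'a set \<Rightarrow> bool" where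
  "locally_unit_regular smult A \<longleftrightarrow>
     (\<forall>F. finite F \<and> F \<subseteq> A \<longrightarrow>
        (\<exists>S. subalgebra smult S \<and> S \<subseteq> A \<and> F \<subseteq> S \<and> unit_regular_with_identity S))"

definition corner :: "'a::ring \<Rightarrow> 'a set \<Rightarrow> 'a set" where
  "corner e A = (\<lambda>a. e * a * e) ` A"

text \<open>p is a surjective K-algebra homomorphism onto Q with kernel J, i.e. Q is (a copy of) R/J.\<close>
definition quotient_map :: "('k::field \<Rightarrow> 'a::ring \<Rightarrow> 'a) \<Rightarrow> ('k \<Rightarrow> 'q::ring \<Rightarrow> 'q)
    \<Rightarrow> ('a \<Rightarrow> 'q) \<Rightarrow> 'a set \<Rightarrow> bool" where
  "quotient_map smult smultQ p J \<longleftrightarrow>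
     (\<forall>x y. p (x + y) = p x + p y) \<and> (\<forall>x y. p (x * y) = p x * p y) \<and>
     (\<forall>c x. p (smult c x) = smultQ c (p x)) \<and> surj p \<and> {x. p x = 0} = J"

end

theory Submission
  imports Defs
begin


lemmas nsimps = ring_distribs mult.assoc[symmetric]

lemma lext: "a*b = (c::'a::ring) \<Longrightarrow> z*a*b = z*c"
  by (simp add: mult.assoc)
lemma lext3: "a*b*c = (d::'a::ring) \<Longrightarrow> z*a*b*c = z*d"
  by (simp add: mult.assoc)

definition closed_ring :: "'a::ring set \<Rightarrow> bool" where
  "closed_ring S \<longleftrightarrow> 0 \<in> S \<and> (\<forall>x\<in>S. \<forall>y\<in>S. x + y \<in> S \<and> x - y \<in> S \<and> x * y \<in> S)"

definition iiso :: "'a::ring set \<Rightarrow> 'a \<Rightarrow> 'a \<Rightarrow> bool" where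
  "iiso S e f \<longleftrightarrow> (\<exists>x\<in>S. \<exists>y\<in>S. x*y = e \<and> y*x = f \<and> e*x = x \<and> x*f = x \<and> f*y = y \<and> y*e = y)"

lemma iisoE:
  assumes "iiso S e f"
  obtains x y where "x\<in>S" "y\<in>S" "x*y = e" "y*x = f" "e*x = x" "x*f = x" "f*y = y" "y*e = y"
  using assms unfolding iiso_def by blast

lemma iisoI:
  assumes "x\<in>S" "y\<in>S" "x*y = e" "y*x = f" "e*x = x" "x*f = x" "f*y = y" "y*e = y"
  shows "iiso S e f"
  using assms unfolding iiso_def by blast

definition UR :: "'a::ring set \<Rightarrow> 'a \<Rightarrow> bool" where
  "UR S g \<longleftrightarrow> (\<forall>x\<in>S. \<exists>u. is_unit_in S g u \<and> x*u*x = x)"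

lemma cr_add: "closed_ring S \<Longrightarrow> x \<in> S \<Longrightarrow> y \<in> S \<Longrightarrow> x + y \<in> S"
  and cr_diff: "closed_ring S \<Longrightarrow> x \<in> S \<Longrightarrow> y \<in> S \<Longrightarrow> x - y \<in> S"
  and cr_mult: "closed_ring S \<Longrightarrow> x \<in> S \<Longrightarrow> y \<in> S \<Longrightarrow> x * y \<in> S"
  and cr_zero: "closed_ring S \<Longrightarrow> 0 \<in> S"
  by (auto simp: closed_ring_def)

lemma iso_sym: "iiso S e f \<Longrightarrow> iiso S f e"
  unfolding iiso_def by blast

lemma iso_trans:
  assumes S: "closed_ring S" and "iiso S e f" and "iiso S f h"
  shows "iiso S e h"
proof -
  obtain x1 y1 where a: "x1\<in>S" "y1\<in>S" "x1*y1 = e" "y1*x1 = f" "e*x1 = x1" "x1*f = x1" "f*y1 = y1" "y1*e = y1"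
    using assms(2) unfolding iiso_def by blast
  obtain x2 y2 where b: "x2\<in>S" "y2\<in>S" "x2*y2 = f" "y2*x2 = h" "f*x2 = x2" "x2*h = x2" "h*y2 = y2" "y2*f = y2"
    using assms(3) unfolding iiso_def by blast
  show ?thesis unfolding iiso_def
  proof (intro bexI conjI)
    show "x1*x2*(y2*y1) = e" using a b lext[OF b(3)] by (simp add: nsimps)
    show "y2*y1*(x1*x2) = h" using a b lext[OF a(4)] by (simp add: nsimps)
    show "e*(x1*x2) = x1*x2" using a b by (simp add: nsimps)
    show "x1*x2*h = x1*x2" using a b lext[OF b(6)] by (simp add: nsimps)
    show "h*(y2*y1) = y2*y1" using a b by (simp add: nsimps)
    show "y2*y1*e = y2*y1" using a b lext[OF a(8)] by (simp add: nsimps)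
  qed (use a b S in \<open>auto intro: cr_mult\<close>)
qed

lemma iso_same_right:
  assumes S: "closed_ring S" and g: "is_identity S g" and "a \<in> S" "b \<in> S"
    and ab: "a*b = b" and ba: "b*a = a"
  shows "iiso S (g-a) (g-b)"
proof -
  have ga: "g*a = a" "a*g = a" "g*b = b" "b*g = b" "g*g = g" using g assms(3,4) unfolding is_identity_def by auto
  have aa: "a*a = a" by (metis ab ba mult.assoc)
  have bb: "b*b = b" by (metis ab ba mult.assoc)
  show ?thesis unfolding iiso_def
    apply (rule bexI[of _ "g-a"], rule bexI[of _ "g-b"])
    using ga aa bb ab ba lext[OF ga(2)] lext[OF ga(4)] lext[OF ga(5)] lext[OF aa] lext[OF bb] lext[OF ab] lext[OF ba] apply (simp add: nsimps)
    using S g assms(3,4) by (auto simp: is_identity_def intro: cr_diff)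
qed

lemma iso_same_left:
  assumes S: "closed_ring S" and g: "is_identity S g" and "a \<in> S" "b \<in> S"
    and ab: "a*b = a" and ba: "b*a = b"
  shows "iiso S (g-a) (g-b)"
proof -
  have ga: "g*a = a" "a*g = a" "g*b = b" "b*g = b" "g*g = g" using g assms(3,4) unfolding is_identity_def by auto
  have aa: "a*a = a" by (metis ab ba mult.assoc)
  have bb: "b*b = b" by (metis ab ba mult.assoc)
  show ?thesis unfolding iiso_def
    apply (rule bexI[of _ "g-b"], rule bexI[of _ "g-a"])
    using ga aa bb ab ba lext[OF ga(2)] lext[OF ga(4)] lext[OF ga(5)] lext[OF aa] lext[OF bb] lext[OF ab] lext[OF ba] apply (simp add: nsimps)
    using S g assms(3,4) by (auto simp: is_identity_def intro: cr_diff)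
qed


lemma iso_unit:
  assumes S: "closed_ring S" and g: "is_identity S g" and xS: "x \<in> S"
    and u: "is_unit_in S g u" and xux: "x*u*x = x"
  shows "iiso S (g - x*u) (g - u*x)"
proof -
  obtain v where v: "v \<in> S" "u*v = g" "v*u = g" "u \<in> S" using u unfolding is_unit_in_def by blast
  have gg: "g*x = x" "x*g = x" "g*u = u" "u*g = u" "g*v = v" "v*g = v" "g*g = g"
    using g xS v unfolding is_identity_def by auto
  note h = gg lext[OF gg(2)] lext[OF gg(4)] lext[OF gg(6)] v(2,3) xux lext[OF v(2)] lext[OF v(3)] lext3[OF xux]
  show ?thesis unfolding iiso_def
    apply (rule bexI[of _ "v - x"], rule bexI[of _ "u - u*x*u"])
    using h apply (simp add: nsimps)
    using S g xS v by (auto intro: cr_diff cr_mult)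
qed

lemma URL:
  assumes S: "closed_ring S" and g: "is_identity S g" and ur: "UR S g"
    and pS: "p \<in> S" and qS: "q \<in> S" and pq: "iiso S p q"
  shows "iiso S (g-p) (g-q)"
proof -
  obtain x y where a: "x\<in>S" "y\<in>S" "x*y = p" "y*x = q" "p*x = x" "x*q = x" "q*y = y" "y*p = y"
    using pq unfolding iiso_def by blast
  obtain u where u: "is_unit_in S g u" "x*u*x = x" using ur a(1) unfolding UR_def by blast
  have uS: "u \<in> S" using u unfolding is_unit_in_def by blast
  have xuS: "x*u \<in> S" "u*x \<in> S" using S a(1) uS by (auto intro: cr_mult)
  have e1: "p*(x*u) = x*u" using a(5) by (metis mult.assoc)
  have e2: "x*u*p = p" using a(3) u(2) by (metis mult.assoc)
  have e3: "q*(u*x) = q" using a(4) u(2) by (metis mult.assoc)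
  have e4: "u*x*q = u*x" using a(6) by (metis mult.assoc)
  have 1: "iiso S (g-p) (g-x*u)"
    by (rule iso_same_right[OF S g pS xuS(1) e1 e2])
  have 2: "iiso S (g-q) (g-u*x)"
    by (rule iso_same_left[OF S g qS xuS(2) e3 e4])
  show ?thesis
    using iso_trans[OF S 1 iso_trans[OF S iso_unit[OF S g a(1) u] iso_sym[OF 2]]] .
qed


lemma corner_mem:
  assumes S: "closed_ring S" and eS: "e \<in> S" and ee: "e*e = e"
  shows "z \<in> corner e S \<longleftrightarrow> z \<in> S \<and> e*z*e = z"
proof
  assume "z \<in> corner e S"
  then obtain s where s: "s \<in> S" "z = e*s*e" unfolding corner_def by blast
  have "e*z*e = e*e*s*(e*e)" using s by (simp add: mult.assoc)
  then show "z \<in> S \<and> e*z*e = z" using s ee S eS by (auto intro: cr_mult)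
next
  assume "z \<in> S \<and> e*z*e = z"
  then show "z \<in> corner e S" unfolding corner_def by (metis imageI)
qed

lemma corner_mem2:
  assumes S: "closed_ring S" and eS: "e \<in> S" and ee: "e*e = e"
  shows "z \<in> corner e S \<longleftrightarrow> z \<in> S \<and> e*z = z \<and> z*e = z"
proof -
  have "e*z*e = z \<longleftrightarrow> e*z = z \<and> z*e = z"
  proof
    assume h: "e*z*e = z"
    have "e*z = e*(e*z*e)" using h by simp
    also have "\<dots> = z" using h ee by (metis mult.assoc)
    finally have 1: "e*z = z" .
    have "z*e = (e*z*e)*e" using h by simp
    also have "\<dots> = z" using h ee by (metis mult.assoc)
    finally show "e*z = z \<and> z*e = z" using 1 by simp
  qed simp
  then show ?thesis using corner_mem[OF assms] by simp
qed

lemma corner_closed: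
  assumes S: "closed_ring S" and eS: "e \<in> S" and ee: "e*e = e"
  shows "closed_ring (corner e S)" "is_identity (corner e S) e"
proof -
  note cm = corner_mem2[OF S eS ee]
  show "closed_ring (corner e S)" unfolding closed_ring_def
  proof (intro conjI ballI)
    show "0 \<in> corner e S" using cm S by (simp add: cr_zero)
    fix x y assume "x \<in> corner e S" "y \<in> corner e S"
    then have x: "x \<in> S" "e*x = x" "x*e = x" and y: "y \<in> S" "e*y = y" "y*e = y" using cm by auto
    have "e*(x*y) = x*y" "(x*y)*e = x*y" using x y by (simp_all add: mult.assoc[symmetric]) (simp add: mult.assoc)
    then show "x * y \<in> corner e S" using cm x y S by (auto intro: cr_mult)
    show "x + y \<in> corner e S" "x - y \<in> corner e S" using x y S cm by (auto simp: algebra_simps intro: cr_add cr_diff)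
  qed
  show "is_identity (corner e S) e" unfolding is_identity_def
    using eS ee cm by auto
qed


lemma unit_from_iso:
  assumes S: "closed_ring S" and e: "is_identity S e" and aS: "a \<in> S" and cS: "c \<in> S"
    and aca: "a*c*a = a" and cac: "c*a*c = c"
    and iso: "iiso S (e - a*c) (e - c*a)"
  shows "\<exists>w. is_unit_in S e w \<and> a*w*a = a"
proof -
  obtain s t where st: "s\<in>S" "t\<in>S" "s*t = e - a*c" "t*s = e - c*a" "(e - a*c)*s = s"
     "s*(e - c*a) = s" "(e - c*a)*t = t" "t*(e-a*c) = t"
    using iso unfolding iiso_def by blast
  have ea: "e*a = a" "a*e = a" "e*c = c" "c*e = c" using e aS cS unfolding is_identity_def by auto
  have cs: "c*s = 0"
  proof -
    have "c*s = c*((e - a*c)*s)" by (simp only: st(5))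
    also have "\<dots> = (c*e - c*a*c)*s" by (simp add: algebra_simps)
    finally show ?thesis using ea cac by simp
  qed
  have ta: "t*a = 0"
  proof -
    have "t*a = (t*(e - a*c))*a" by (simp only: st(8))
    also have "\<dots> = t*(e*a - a*c*a)" by (simp add: algebra_simps)
    finally show ?thesis using ea aca by simp
  qed
  have at: "a*t = 0"
  proof -
    have "a*t = a*((e - c*a)*t)" by (simp only: st(7))
    also have "\<dots> = (a*e - a*c*a)*t" by (simp add: algebra_simps)
    finally show ?thesis using ea aca by simp
  qed
  have sc: "s*c = 0"
  proof -
    have "s*c = (s*(e - c*a))*c" by (simp only: st(6))
    also have "\<dots> = s*(e*c - c*a*c)" by (simp add: algebra_simps)
    finally show ?thesis using ea cac by simp
  qed
  have "(c + t)*(a + s) = e" using cs ta st(4) by (simp add: algebra_simps)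
  moreover have "(a + s)*(c + t) = e" using at sc st(3) by (simp add: algebra_simps)
  moreover have "a*(c+t)*a = a" using aca by (simp add: distrib_left distrib_right at)
  moreover have "c + t \<in> S" "a + s \<in> S" using S aS cS st(1,2) by (auto intro: cr_add)
  ultimately show ?thesis unfolding is_unit_in_def by blast
qed

lemma corner_UR:
  assumes S: "closed_ring S" and g: "is_identity S g" and ur: "UR S g"
    and eS: "e \<in> S" and ee: "e*e = e"
  shows "UR (corner e S) e"
  unfolding UR_def
proof
  fix a assume "a \<in> corner e S"
  note cm = corner_mem2[OF S eS ee]
  note ce = corner_closed[OF S eS ee]
  have a: "a \<in> S" "e*a = a" "a*e = a" using cm \<open>a \<in> corner e S\<close> by auto
  obtain u where u: "is_unit_in S g u" "a*u*a = a" using ur a(1) unfolding UR_def by blast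
  have uS: "u \<in> S" using u unfolding is_unit_in_def by auto
  define c0 where "c0 = e*u*e"
  have c0S: "c0 \<in> S" unfolding c0_def using S eS uS by (auto intro: cr_mult)
  have "a*c0*a = a*e*u*(e*a)" unfolding c0_def by (simp add: mult.assoc)
  then have ac0a: "a*c0*a = a" using a u(2) by simp
  define c where "c = c0*a*c0"
  have cS: "c \<in> S" unfolding c_def using S c0S a by (auto intro: cr_mult)
  have aca: "a*c*a = a" unfolding c_def using ac0a by (metis mult.assoc)
  have cac: "c*a*c = c" unfolding c_def using ac0a by (metis mult.assoc)
  have ec: "e*c = c" "c*e = c" unfolding c_def c0_def using ee by (simp_all add: mult.assoc[symmetric]) (simp add: mult.assoc)
  have gg: "g*a = a" "a*g = a" "g*c = c" "c*g = c" "g*e = e" "e*g = e" "g*g = g"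
    using g a(1) cS eS unfolding is_identity_def by auto
  define G where "G = g - e"
  have GS: "G \<in> S" unfolding G_def using S g eS by (auto intro: cr_diff simp: is_identity_def)
  have Gf: "a*G = 0" "G*a = 0" "c*G = 0" "G*c = 0" "G*G = G" unfolding G_def
    using gg ec a ee by (simp_all add: algebra_simps)
  define p where "p = a*c + G"
  define q where "q = c*a + G"
  have pS: "p \<in> S" "q \<in> S" unfolding p_def q_def using S a(1) cS GS
    by (auto intro!: cr_add cr_mult)
  note hh = Gf aca cac lext[OF Gf(1)] lext[OF Gf(3)] lext3[OF aca] lext3[OF cac]
  have "iiso S p q"
    apply (rule iisoI[of "a + G" _ "c + G"])
    using S a(1) cS GS apply (auto intro!: cr_add)[2]
    unfolding p_def q_def using hh by (simp_all add: distrib_left distrib_right mult.assoc[symmetric])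
  from URL[OF S g ur pS this] have "iiso S (g-p) (g-q)" .
  moreover have "g - p = e - a*c" "g - q = e - c*a" unfolding p_def q_def G_def by simp_all
  ultimately have "iiso S (e - a*c) (e - c*a)" by simp
  then obtain x y where xy: "x\<in>S" "y\<in>S" "x*y = e - a*c" "y*x = e - c*a" "(e - a*c)*x = x"
     "x*(e - c*a) = x" "(e - c*a)*y = y" "y*(e-a*c) = y"
      by (rule iisoE)
    have "e*x = e*((e - a*c)*x)" by (simp only: xy(5))
    also have "\<dots> = (e*e - e*a*c)*x" by (simp add: algebra_simps)
    finally have ex: "e*x = x" using ee a xy(5) by simp
    have "x*e = (x*(e - c*a))*e" by (simp only: xy(6))
    also have "\<dots> = x*(e*e - c*a*e)" by (simp add: algebra_simps)
    finally have xe: "x*e = x" using ee a xy(6) by (simp add: mult.assoc)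
    have "e*y = e*((e - c*a)*y)" by (simp only: xy(7))
    also have "\<dots> = (e*e - e*c*a)*y" by (simp add: algebra_simps)
    finally have ey: "e*y = y" using ee ec xy(7) by simp
    have "y*e = (y*(e - a*c))*e" by (simp only: xy(8))
    also have "\<dots> = y*(e*e - a*c*e)" by (simp add: algebra_simps)
    finally have ye: "y*e = y" using ee ec xy(8) by (simp add: mult.assoc)
    have "x \<in> corner e S" "y \<in> corner e S" using cm xy(1,2) ex xe ey ye by auto
    then have "iiso (corner e S) (e - a*c) (e - c*a)" using xy(3-8) by (rule iisoI)
  moreover have "a \<in> corner e S" "c \<in> corner e S" using cm a cS ec by auto
  ultimately obtain w where "is_unit_in (corner e S) e w" "a*w*a = a"
    using unit_from_iso[OF ce(1) ce(2) _ _ aca cac] by blast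
  then show "\<exists>u. is_unit_in (corner e S) e u \<and> a*u*a = a" by blast
qed



lemma kalg_module: "k_algebra smult \<Longrightarrow> module smult"
proof -
  assume "k_algebra smult"
  then have V: "vector_space smult" unfolding k_algebra_def by blast
  show "module smult" by (rule module.intro) (use vector_space.vector_space_assms[OF V] in auto)
qed

lemma kalg_mult: "k_algebra smult \<Longrightarrow> smult c (a*b) = smult c a * b"
  "k_algebra smult \<Longrightarrow> smult c (a*b) = a * smult c b"
  unfolding k_algebra_def by blast+

lemma subalg_closed:
  assumes K: "k_algebra smult" and S: "subalgebra smult S"
  shows "closed_ring S"
proof -
  have M: "module smult" using K by (rule kalg_module)
  have sub: "module.subspace smult S" using S unfolding subalgebra_def by auto
  show ?thesis unfolding closed_ring_def
    using module.subspace_0[OF M sub] module.subspace_add[OF M sub] module.subspace_diff[OF M sub] S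
    unfolding subalgebra_def by auto
qed

lemma subalg_corner:
  assumes K: "k_algebra smult" and S: "subalgebra smult S" and eS: "e \<in> S" and ee: "e*e = e"
  shows "subalgebra smult (corner e S)"
proof -
  have M: "module smult" using K by (rule kalg_module)
  have CR: "closed_ring S" using subalg_closed[OF K S] .
  note cc = corner_closed[OF CR eS ee]
  have sub: "module.subspace smult S" using S unfolding subalgebra_def by auto
  have "module.subspace smult (corner e S)"
    unfolding module.subspace_def[OF M]
  proof (intro conjI ballI allI)
    show "0 \<in> corner e S" using cc(1) by (rule cr_zero)
    fix x y assume "x \<in> corner e S" "y \<in> corner e S"
    then show "x + y \<in> corner e S" by (rule cr_add[OF cc(1)])
  next
    fix c x assume "x \<in> corner e S"
    then obtain s where s: "s \<in> S" "x = e*s*e" unfolding corner_def by blast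
    have "smult c x = e * smult c s * e" using s kalg_mult[OF K] by simp
    moreover have "smult c s \<in> S" using module.subspace_scale[OF M sub s(1)] .
    ultimately show "smult c x \<in> corner e S" unfolding corner_def by blast
  qed
  then show ?thesis unfolding subalgebra_def using cc(1) by (auto intro: cr_mult)
qed

lemma URI_iff: "unit_regular_with_identity S \<longleftrightarrow> (\<exists>g. is_identity S g \<and> UR S g)"
  unfolding unit_regular_with_identity_def UR_def by auto

lemma CT:
  assumes K: "k_algebra smult" and S: "subalgebra smult S" and U: "unit_regular_with_identity S"
    and eS: "e \<in> S" and ee: "e*e = e"
  shows "subalgebra smult (corner e S)" "is_identity (corner e S) e" "UR (corner e S) e"
proof -
  have CR: "closed_ring S" using subalg_closed[OF K S] .
  obtain g where g: "is_identity S g" "UR S g" using U unfolding URI_iff by blast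
  show "subalgebra smult (corner e S)" by (rule subalg_corner[OF K S eS ee])
  show "is_identity (corner e S) e" using corner_closed[OF CR eS ee] by simp
  show "UR (corner e S) e" by (rule corner_UR[OF CR g eS ee])
qed

lemma corner_sub: "closed_ring S \<Longrightarrow> e \<in> S \<Longrightarrow> corner e S \<subseteq> S"
  unfolding corner_def by (auto intro: cr_mult)

lemma qm_add: "quotient_map smult smultQ p J \<Longrightarrow> p (x + y) = p x + p y"
  and qm_mult: "quotient_map smult smultQ p J \<Longrightarrow> p (x * y) = p x * p y"
  and qm_surj: "quotient_map smult smultQ p J \<Longrightarrow> \<exists>x. p x = z"
  and qm_ker: "quotient_map smult smultQ p J \<Longrightarrow> x \<in> J \<longleftrightarrow> p x = 0"
  unfolding quotient_map_def by (auto simp: surj_def) (metis)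

lemma qm_zero: "quotient_map smult smultQ p J \<Longrightarrow> p 0 = 0"
  using qm_add[of smult smultQ p J 0 0] by simp

lemma qm_diff: "quotient_map smult smultQ p J \<Longrightarrow> p (x - y) = p x - p y"
  using qm_add[of smult smultQ p J "x - y" y] by (simp add: algebra_simps)

lemma ideal_mult: "alg_ideal smult J \<Longrightarrow> x \<in> J \<Longrightarrow> r*x \<in> J"
  "alg_ideal smult J \<Longrightarrow> x \<in> J \<Longrightarrow> x*r \<in> J"
  unfolding alg_ideal_def by auto

lemma corner_UNIV: "z \<in> corner e UNIV \<longleftrightarrow> e*z*e = z" if "e*e = e"
  using corner_mem[of UNIV e z] that by (simp add: closed_ring_def)

lemma corner_J: "alg_ideal smult J \<Longrightarrow> e*e = e \<Longrightarrow> z \<in> corner e J \<longleftrightarrow> z \<in> J \<and> e*z*e = z"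
proof
  assume J: "alg_ideal smult J" and ee: "e*e = e" and "z \<in> corner e J"
  then obtain j where j: "j \<in> J" "z = e*j*e" unfolding corner_def by blast
  have "e*z*e = e*e*j*(e*e)" using j by (simp add: mult.assoc)
  then show "z \<in> J \<and> e*z*e = z" using j ee ideal_mult[OF J] by auto
next
  assume "z \<in> J \<and> e*z*e = z" then show "z \<in> corner e J" unfolding corner_def by (metis imageI)
qed


lemma dir1:
  assumes K: "k_algebra smult" and J: "alg_ideal smult J" and P: "quotient_map smult smultQ p J"
    and L: "locally_unit_regular smult (UNIV::'a::ring set)"
    and ee: "e*e = e" and x: "x \<in> corner e UNIV" and y: "y \<in> corner e UNIV"
    and xy: "x*y - e \<in> corner e J" and yx: "y*x - e \<in> corner e J"
  shows "\<exists>u. is_unit_in (corner e UNIV) e u \<and> u - x \<in> corner e J"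
proof -
  obtain S where S: "subalgebra smult S" "{e, x} \<subseteq> S" "unit_regular_with_identity S"
    using L unfolding locally_unit_regular_def by (metis finite.emptyI finite_insert subset_UNIV)
  have CR: "closed_ring S" using subalg_closed[OF K S(1)] .
  have eS: "e \<in> S" "x \<in> S" using S(2) by auto
  note ct = CT[OF K S(1) S(3) eS(1) ee]
  note cm = corner_mem2[OF CR eS(1) ee]
  have exe: "e*x*e = x" using x corner_UNIV[OF ee] by blast
  then have ex: "e*x = x" "x*e = x" by (metis ee mult.assoc)+
  have "x \<in> corner e S" using cm eS ex by auto
  then obtain u where u: "is_unit_in (corner e S) e u" "x*u*x = x" using ct(3) unfolding UR_def by blast
  then obtain v where v: "u \<in> corner e S" "v \<in> corner e S" "u*v = e" "v*u = e" unfolding is_unit_in_def by blast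
  have uv: "e*u = u" "u*e = u" "e*v = v" "v*e = v" using v cm by auto
  have xyJ: "x*y - e \<in> J" "y*x - e \<in> J" using xy yx corner_J[OF J ee] by auto
  have "p (x*y - e) = 0" "p (y*x - e) = 0" using xyJ qm_ker[OF P] by blast+
  then have pxy: "p x * p y = p e" "p y * p x = p e" using qm_diff[OF P] qm_mult[OF P] by simp_all
  have pu: "p x * p u * p x = p x" "p u * p v = p e" "p v * p u = p e" "p e * p u = p u" "p v * p e = p v"
    "p e * p x = p x"
    using u(2) v(3,4) uv ex by (simp_all add: qm_mult[OF P, symmetric])
  have "p u * p x = p y * p x * p u * p x" using pu(4) pxy(2) by metis
  also have "\<dots> = p y * (p x * p u * p x)" by (simp add: mult.assoc)
  also have "\<dots> = p e" using pu(1) pxy(2) by simp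
  finally have ux: "p u * p x = p e" .
  have "p v = p v * (p u * p x)" using ux pu by simp
  also have "\<dots> = p x" using pu by (simp add: mult.assoc[symmetric])
  finally have "p v = p x" .
  then have "v - x \<in> J" using qm_ker[OF P] qm_diff[OF P] by simp
  moreover have "e*(v - x)*e = v - x" using uv ex by (simp add: algebra_simps)
  ultimately have "v - x \<in> corner e J" using corner_J[OF J ee] by blast
  moreover have "e*v*e = v" "e*u*e = u" using uv by simp_all
  then have "is_unit_in (corner e UNIV) e v" unfolding is_unit_in_def
    using v(3,4) corner_UNIV[OF ee, of u] corner_UNIV[OF ee, of v] by blast
  ultimately show ?thesis by blast
qed



lemma rext: "a*b = (c::'a::ring) \<Longrightarrow> a*(b*z) = c*z"
  by (simp add: mult.assoc[symmetric])

definition reg :: "'a::ring set \<Rightarrow> bool" where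
  "reg A \<longleftrightarrow> (\<forall>x\<in>A. \<exists>c\<in>A. x*c*x = x)"

lemma ideal_closed: "k_algebra smult \<Longrightarrow> alg_ideal smult J \<Longrightarrow> closed_ring J"
proof -
  assume K: "k_algebra smult" and J: "alg_ideal smult J"
  have M: "module smult" using K by (rule kalg_module)
  have sub: "module.subspace smult J" using J unfolding alg_ideal_def by auto
  show ?thesis unfolding closed_ring_def
    using module.subspace_0[OF M sub] module.subspace_add[OF M sub] module.subspace_diff[OF M sub] J
    unfolding alg_ideal_def by auto
qed

lemma lur_reg:
  assumes L: "locally_unit_regular smult A" shows "reg A"
  unfolding reg_def
proof
  fix x assume "x \<in> A"
  then obtain S where S: "S \<subseteq> A" "x \<in> S" "unit_regular_with_identity S"
    using L unfolding locally_unit_regular_def by (metis empty_subsetI finite.emptyI finite_insert insert_subset)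
  then obtain u where "is_unit_in S (SOME g. True) u \<or> True" "u \<in> S" "x*u*x = x"
    unfolding unit_regular_with_identity_def is_unit_in_def by blast
  then show "\<exists>c\<in>A. x*c*x = x" using S by blast
qed

lemma reg_ext:
  fixes p :: "'a::ring \<Rightarrow> 'q::ring" and J :: "'a set"
  assumes P: "quotient_map smult smultQ p J" and RJ: "reg J" and RQ: "reg (UNIV::'q set)"
  shows "reg (UNIV::'a set)"
  unfolding reg_def
proof
  fix a :: 'a
  obtain cq where "p a * cq * p a = p a" using RQ unfolding reg_def by blast
  moreover obtain b where "p b = cq" using qm_surj[OF P] by blast
  ultimately have "p (a - a*b*a) = 0" using qm_diff[OF P] qm_mult[OF P] by simp
  then have jJ: "a - a*b*a \<in> J" using qm_ker[OF P] by blast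
  define j where "j = a - a*b*a"
  obtain c where c: "j*c*j = j" using RJ jJ unfolding reg_def j_def by blast
  have "a*(b + c - c*a*b - b*a*c + b*a*c*a*b)*a = a*b*a + j*c*j"
    unfolding j_def by (simp add: algebra_simps)
  also have "\<dots> = a" using c unfolding j_def by simp
  finally show "\<exists>c\<in>UNIV. a*c*a = a" by blast
qed

lemma LX:
  fixes h :: "'a::ring"
  assumes hh: "h*h = h" and w: "w = m - h*m" and wcw: "w*c*w = w"
  shows "(h + w*c - w*c*h)*(h + w*c - w*c*h) = h + w*c - w*c*h"
    "(h + w*c - w*c*h)*m = m" "\<And>z. h*z = z \<Longrightarrow> (h + w*c - w*c*h)*z = z"
proof -
  have hw: "h*w = 0" unfolding w by (simp add: algebra_simps hh mult.assoc[symmetric])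
  note ff = hh hw wcw lext[OF hh] lext[OF hw] lext3[OF wcw]
  show "(h + w*c - w*c*h)*(h + w*c - w*c*h) = h + w*c - w*c*h"
    using ff by (simp add: nsimps)
  have "(h + w*c - w*c*h)*m = h*m + w*c*(m - h*m)" by (simp add: algebra_simps)
  also have "\<dots> = m" using wcw w by simp
  finally show "(h + w*c - w*c*h)*m = m" .
  fix z assume "h*z = z"
  then show "(h + w*c - w*c*h)*z = z" using lext[OF \<open>h*z = z\<close>] by (simp add: nsimps)
qed

lemma RX:
  fixes k :: "'a::ring"
  assumes kk: "k*k = k" and w: "w = m - m*k" and wcw: "w*c*w = w"
  shows "(k + c*w - k*c*w)*(k + c*w - k*c*w) = k + c*w - k*c*w"
    "m*(k + c*w - k*c*w) = m" "\<And>z. z*k = z \<Longrightarrow> z*(k + c*w - k*c*w) = z"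
proof -
  have wk: "w*k = 0" unfolding w by (simp add: algebra_simps kk mult.assoc)
  note ff = kk wk wcw lext[OF kk] lext[OF wk] lext3[OF wcw]
  show "(k + c*w - k*c*w)*(k + c*w - k*c*w) = k + c*w - k*c*w"
    using ff by (simp add: nsimps)
  have "m*(k + c*w - k*c*w) = m*k + (m - m*k)*c*w" by (simp add: algebra_simps)
  also have "\<dots> = m" using wcw w by simp
  finally show "m*(k + c*w - k*c*w) = m" .
  fix z assume "z*k = z"
  then show "z*(k + c*w - k*c*w) = z" using lext[OF \<open>z*k = z\<close>] by (simp add: nsimps)
qed

lemma COMB:
  fixes h :: "'a::ring"
  assumes hh: "h*h = h" and kk: "k*k = k" and hk: "h*k = h"
  shows "(h + k - k*h)*(h + k - k*h) = h + k - k*h" "\<And>z. h*z = z \<Longrightarrow> (h + k - k*h)*z = z"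
    "\<And>z. z*k = z \<Longrightarrow> z*(h + k - k*h) = z"
proof -
  note ff = hh kk hk lext[OF hh] lext[OF kk] lext[OF hk]
  show "(h + k - k*h)*(h + k - k*h) = h + k - k*h" using ff by (simp add: nsimps)
  fix z assume "h*z = z"
  then show "(h + k - k*h)*z = z" using lext[OF \<open>h*z = z\<close>] by (simp add: nsimps)
next
  fix z assume "z*k = z"
  then show "z*(h + k - k*h) = z" using lext[OF \<open>z*k = z\<close>] lext[OF hk] hh by (simp add: nsimps)
qed


lemma LOC_left:
  assumes R: "reg (UNIV::'a::ring set)" and F: "finite (F::'a set)"
  shows "\<exists>h. h*h = h \<and> (\<forall>x\<in>F. h*x = x)"
  using F
proof (induction F rule: finite_induct)
  case empty show ?case by (rule exI[of _ 0]) simp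
next
  case (insert m F)
  then obtain h where h: "h*h = h" "\<forall>x\<in>F. h*x = x" by blast
  define w where "w = m - h*m"
  obtain c where c: "w*c*w = w" using R unfolding reg_def by blast
  note lx = LX[OF h(1) w_def c]
  show ?case using lx h(2) by (intro exI[of _ "h + w*c - w*c*h"]) auto
qed

lemma LOC_right:
  assumes R: "reg (UNIV::'a::ring set)" and F: "finite (F::'a set)"
  shows "\<exists>k. k*k = k \<and> (\<forall>x\<in>F. x*k = x)"
  using F
proof (induction F rule: finite_induct)
  case empty show ?case by (rule exI[of _ 0]) simp
next
  case (insert m F)
  then obtain k where k: "k*k = k" "\<forall>x\<in>F. x*k = x" by blast
  define w where "w = m - m*k"
  obtain c where c: "w*c*w = w" using R unfolding reg_def by blast
  note rx = RX[OF k(1) w_def c]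
  show ?case using rx k(2) by (intro exI[of _ "k + c*w - k*c*w"]) auto
qed

lemma LOC:
  assumes R: "reg (UNIV::'a::ring set)" and F: "finite (F::'a set)"
  shows "\<exists>g. g*g = g \<and> (\<forall>x\<in>F. g*x = x \<and> x*g = x)"
proof -
  obtain h where h: "h*h = h" "\<forall>x\<in>F. h*x = x" using LOC_left[OF R F] by blast
  obtain k where k: "k*k = k" "\<forall>x\<in>insert h F. x*k = x" using LOC_right[OF R] F by blast
  note cb = COMB[OF h(1) k(1)]
  have "h*k = h" using k(2) by simp
  note cb = COMB[OF h(1) k(1) this]
  show ?thesis using cb h(2) k(2) by (intro exI[of _ "h + k - k*h"]) auto
qed

lemma LU2:
  assumes CJ: "closed_ring J" and IJ: "\<And>x r. x \<in> J \<Longrightarrow> r*x \<in> J \<and> x*r \<in> J" and RJ: "reg J"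
    and ee: "e*e = e" and l: "l \<in> J" "e*l = l" and r: "r \<in> J" "r*e = r"
  shows "\<exists>k\<in>J. k*k = k \<and> e*k = k \<and> k*e = k \<and> k*l = l \<and> r*k = r"
proof -
  obtain cl where cl: "l*cl*l = l" using RJ l(1) unfolding reg_def by blast
  obtain cr where cr: "r*cr*r = r" using RJ r(1) unfolding reg_def by blast
  have a1: "l*(cl*e)*l = l" using cl l(2) by (simp add: mult.assoc)
  define k1 where "k1 = l*(cl*e)"
  have lx: "k1*k1 = k1" "k1*l = l" using LX(1,2)[of 0 l l "cl*e"] a1 unfolding k1_def by simp_all
  have k1: "k1*k1 = k1" "k1*l = l" "k1 \<in> J" "e*k1 = k1" "k1*e = k1"
    using lx l IJ ee lext[OF ee] unfolding k1_def by (auto simp: mult.assoc[symmetric])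
  have a2: "r*(e*cr)*r = r" using cr r(2) by (simp add: mult.assoc[symmetric])
  define k2 where "k2 = e*cr*r"
  have rx: "k2*k2 = k2" "r*k2 = r" using RX(1,2)[of 0 r r "e*cr"] a2 unfolding k2_def by (simp_all add: mult.assoc)
  have k2: "k2*k2 = k2" "r*k2 = r" "k2 \<in> J" "e*k2 = k2" "k2*e = k2"
    using rx r IJ ee rext[OF ee] unfolding k2_def by (auto simp: mult.assoc)
  define w where "w = k1 - k1*k2"
  have wJ: "w \<in> J" unfolding w_def using CJ k1(3) IJ by (auto intro: cr_diff)
  obtain d where d: "w*d*w = w" using RJ wJ unfolding reg_def by blast
  have we: "w*e = w" "e*w = w" unfolding w_def using k1 k2 rext[OF k1(4)] by (simp_all add: algebra_simps)
  have a3: "w*(e*d)*w = w" using d we by (simp add: mult.assoc[symmetric])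
  note rx2 = RX[OF k2(1) w_def a3]
  define k3 where "k3 = k2 + e*d*w - k2*(e*d)*w"
  have k3: "k3*k3 = k3" "k1*k3 = k1" "r*k3 = r" "k3 \<in> J" "e*k3 = k3" "k3*e = k3"
  proof -
    show "k3*k3 = k3" "k1*k3 = k1" "r*k3 = r" using rx2 k2 unfolding k3_def by (auto simp: mult.assoc)
    show "k3 \<in> J" unfolding k3_def using CJ k2(3) wJ IJ by (auto intro!: cr_diff cr_add)
    show "e*k3 = k3" unfolding k3_def using k2 ee we by (simp add: nsimps)
    show "k3*e = k3" unfolding k3_def using k2 ee we lext[OF we(1)] by (simp add: nsimps)
  qed
  note cb = COMB[OF k1(1) k3(1) k3(2)]
  define k where "k = k1 + k3 - k3*k1"
  have "k \<in> J" unfolding k_def using CJ k1(3) k3(4) IJ by (auto intro!: cr_diff cr_add)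
  moreover have "k*k = k" "k*l = l" "r*k = r" using cb k1(2) k3(3) unfolding k_def by auto
  moreover have "e*k = k" "k*e = k" unfolding k_def using k1 k3 ee lext[OF k1(5)]
    by (simp_all add: nsimps)
  ultimately show ?thesis by blast
qed



lemma IL:
  fixes p :: "'a::ring \<Rightarrow> 'q::ring" and J :: "'a set"
  assumes P: "quotient_map smult smultQ p J" and R: "reg (UNIV::'a set)"
    and gg: "g*g = g" and x: "g*x*g = x" and xx: "p x * p x = p x"
  shows "\<exists>f. f*f = f \<and> g*f*g = f \<and> p f = p x"
proof -
  have gx: "g*x = x" "x*g = x" using x gg by (metis mult.assoc)+
  define a where "a = x*x"
  have ga: "g*a = a" "a*g = a" unfolding a_def using gx by (simp_all add: mult.assoc[symmetric]) (simp add: mult.assoc)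
  obtain y0 where y0: "a*y0*a = a" using R unfolding reg_def by blast
  define y where "y = g*y0*g"
  have aya: "a*y*a = a" unfolding y_def using ga y0 by (metis mult.assoc)
  have yg: "y*g = y" "g*y = y" unfolding y_def using gg by (metis mult.assoc)+
  define e0 where "e0 = a*y"
  have e0: "e0*e0 = e0" "g*e0 = e0" "e0*g = e0" unfolding e0_def using aya ga yg by (metis mult.assoc)+
  define n where "n = e0*x*(g - e0)"
  have ne: "e0*n = n" "n*e0 = 0" "g*n = n" "n*g = n"
    unfolding n_def using e0 gg by (simp_all add: algebra_simps mult.assoc[symmetric] lext[OF e0(1)] lext[OF e0(3)] lext[OF gg] lext[OF e0(2)]
       del: mult.assoc)
  have nn: "n*n = 0"
  proof -
    have "n*n = (n*e0)*x*(g - e0)" unfolding n_def by (simp add: mult.assoc)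
    then show ?thesis using ne by simp
  qed
  define f where "f = e0 + n"
  have "f*f = f" unfolding f_def using e0 ne nn by (simp add: algebra_simps)
  moreover have "g*f*g = f" unfolding f_def using e0 ne by (simp add: algebra_simps)
  moreover have "p f = p x"
  proof -
    note hom = qm_mult[OF P] qm_add[OF P] qm_diff[OF P]
    have X1: "p x * p y * p x = p x"
    proof -
      have "p a * p y * p a = p a" using aya hom by metis
      then have "p x * p x * p y * (p x * p x) = p x * p x" unfolding a_def hom by simp
      then show ?thesis using xx by (simp add: mult.assoc[symmetric] lext[OF xx])
    qed
    have E: "p e0 = p x * p y" unfolding e0_def a_def using hom xx by simp
    have XG: "p x * p g = p x" using gx hom by metis
    have EX: "p e0 * p x = p x" using E X1 by simp
    have XE: "p x * p e0 = p e0" using E xx by (simp add: mult.assoc[symmetric])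
    have "p f = p e0 + p e0 * p x * (p g - p e0)" unfolding f_def n_def hom by simp
    also have "\<dots> = p x" using EX XE XG by (simp add: algebra_simps)
    finally show ?thesis .
  qed
  ultimately show ?thesis by blast
qed


lemma FIX:
  fixes smult :: "'k::field \<Rightarrow> 'a::ring \<Rightarrow> 'a"
  assumes K: "k_algebra smult" and J: "alg_ideal smult J" and RJ: "reg J"
    and LJ: "locally_unit_regular smult J"
    and gg: "g*g = g" and ff: "f*f = f" and gfg: "g*f*g = f" and gbg: "g*b*g = b"
    and jJ: "b - f \<in> J"
  shows "\<exists>W. is_unit_in (corner g UNIV) g W \<and> b*W*b = b"
proof -
  have CJ: "closed_ring J" using ideal_closed[OF K J] .
  have IJ: "\<And>x r. x \<in> J \<Longrightarrow> r*x \<in> J \<and> x*r \<in> J" using ideal_mult[OF J] by blast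
  define j where "j = b - f"
  have gf: "g*f = f" "f*g = f" using gfg gg by (metis mult.assoc)+
  have gb: "g*b = b" "b*g = b" using gbg gg by (metis mult.assoc)+
  have gj: "g*j = j" "j*g = j" unfolding j_def using gf gb by (simp_all add: algebra_simps)
  define f' where "f' = g - f"
  have f'f: "f'*f' = f'" "f*f' = 0" "f'*f = 0" "g*f' = f'" "f'*g = f'"
    unfolding f'_def using gg gf ff by (simp_all add: algebra_simps)
  have jJ': "j \<in> J" using jJ unfolding j_def .
  have "\<exists>k\<in>J. k*k = k \<and> f*k = k \<and> k*f = k \<and> k*(f*j) = f*j \<and> (j*f)*k = j*f"
    apply (rule LU2[OF CJ IJ RJ ff])
    using IJ[OF jJ'] ff rext[OF ff] by (simp_all add: mult.assoc)
  then obtain h1 where h1: "h1 \<in> J" "h1*h1 = h1" "f*h1 = h1" "h1*f = h1" "h1*(f*j) = f*j" "j*f*h1 = j*f"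
    by blast
  have "\<exists>k\<in>J. k*k = k \<and> f'*k = k \<and> k*f' = k \<and> k*(f'*j) = f'*j \<and> (j*f')*k = j*f'"
    apply (rule LU2[OF CJ IJ RJ f'f(1)])
    using IJ[OF jJ'] f'f(1) rext[OF f'f(1)] by (simp_all add: mult.assoc)
  then obtain h2 where h2: "h2 \<in> J" "h2*h2 = h2" "f'*h2 = h2" "h2*f' = h2" "h2*(f'*j) = f'*j" "j*f'*h2 = j*f'"
    by blast
  have h12: "h1*h2 = 0" "h2*h1 = 0"
  proof -
    have "h1*h2 = (h1*f)*(f'*h2)" using h1 h2 by simp
    also have "\<dots> = h1*(f*f')*h2" by (simp add: mult.assoc)
    finally show "h1*h2 = 0" using f'f by simp
    have "h2*h1 = (h2*f')*(f*h1)" using h1 h2 by simp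
    also have "\<dots> = h2*(f'*f)*h1" by (simp add: mult.assoc)
    finally show "h2*h1 = 0" using f'f by simp
  qed
  define h where "h = h1 + h2"
  have hJ: "h \<in> J" unfolding h_def using CJ h1 h2 by (auto intro: cr_add)
  have hh: "h*h = h" unfolding h_def using h1 h2 h12 by (simp add: algebra_simps)
  have gh1: "g*h1 = h1" "h1*g = h1" "g*h2 = h2" "h2*g = h2"
    using h1(3,4) h2(3,4) gf f'f(4,5) by (metis mult.assoc)+
  have gh: "g*h = h" "h*g = h" unfolding h_def using gh1 by (simp_all add: algebra_simps)
  have fh1: "h2*f = 0" "f*h2 = 0"
  proof -
    show "h2*f = 0" using h2(4) f'f(3) by (metis mult.assoc mult_zero_right)
    show "f*h2 = 0" using h2(3) f'f(2) by (metis mult.assoc mult_zero_left)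
  qed
  have hf: "h*f = h1" "f*h = h1" unfolding h_def using h1 fh1 by (simp_all add: algebra_simps)
  have hj: "h*j = j" "j*h = j"
  proof -
    have a1: "h1*j = f*j" using h1(4,5) by (metis mult.assoc)
    have a2: "h2*j = f'*j" using h2(4,5) by (metis mult.assoc)
    have "h*j = f*j + f'*j" unfolding h_def using a1 a2 by (simp add: algebra_simps)
    also have "\<dots> = j" unfolding f'_def using gj by (simp add: algebra_simps)
    finally show "h*j = j" .
    have b1: "j*h1 = j*f" using h1(3,6) by (metis mult.assoc)
    have b2: "j*h2 = j*f'" using h2(3,6) by (metis mult.assoc)
    have "j*h = j*f + j*f'" unfolding h_def using b1 b2 by (simp add: algebra_simps)
    also have "\<dots> = j" unfolding f'_def using gj by (simp add: algebra_simps)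
    finally show "j*h = j" .
  qed
  have h1h: "h1*h = h1" unfolding h_def using h1 h12 by (simp add: algebra_simps)
  have hh1: "h*h1 = h1" unfolding h_def using h1 h12 by (simp add: algebra_simps)
  define x0 where "x0 = h*b*h"
  have x0J: "x0 \<in> J" unfolding x0_def using IJ hJ by blast
  have x0h: "h*x0 = x0" "x0*h = x0" unfolding x0_def using hh by (metis mult.assoc)+
  have bdec: "b = (f - h*f) + x0"
  proof -
    have "x0 = h*(f + j)*h" unfolding x0_def j_def by simp
    also have "\<dots> = h*f + j" using hf hj hh h1h by (simp add: algebra_simps mult.assoc[symmetric] del: mult.assoc)
    finally show ?thesis unfolding j_def by simp
  qed
  define y0 where "y0 = f - h*f"
  have y0: "y0*y0 = y0" "y0*h = 0" "h*y0 = 0" "y0*g = y0" "g*y0 = y0"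
    unfolding y0_def hf(1) using h1 ff gf gh1 h1h hh1 hf gh
    by (simp_all add: algebra_simps)
  obtain S where S: "subalgebra smult S" "{h, x0} \<subseteq> S" "S \<subseteq> J" "unit_regular_with_identity S"
    using LJ hJ x0J unfolding locally_unit_regular_def by (metis empty_subsetI finite.emptyI finite_insert insert_subset)
  have CS: "closed_ring S" using subalg_closed[OF K S(1)] .
  have hS: "h \<in> S" "x0 \<in> S" using S(2) by auto
  note ct = CT[OF K S(1) S(4) hS(1) hh]
  note cm = corner_mem2[OF CS hS(1) hh]
  have "x0 \<in> corner h S" using cm hS x0h by auto
  then obtain w where w: "is_unit_in (corner h S) h w" "x0*w*x0 = x0" using ct(3) unfolding UR_def by blast
  then obtain w' where w': "w \<in> corner h S" "w' \<in> corner h S" "w*w' = h" "w'*w = h" unfolding is_unit_in_def by blast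
  have wh: "h*w = w" "w*h = w" "h*w' = w'" "w'*h = w'" using w' cm by auto
  have gw: "g*w = w" "w*g = w" "g*w' = w'" "w'*g = w'" using wh gh by (metis mult.assoc)+
  define W where "W = g - h + w"
  define W' where "W' = g - h + w'"
  have WW: "W*W' = g" "W'*W = g" unfolding W_def W'_def using gg gh gw wh hh w'(3,4)
    by (simp_all add: algebra_simps)
  have Wc: "g*W*g = W" "g*W'*g = W'" unfolding W_def W'_def using gg gh gw
    by (simp_all add: algebra_simps)
  have y0w: "y0*w = 0" "w*y0 = 0"
    using wh y0 by (metis mult.assoc mult_zero_left mult_zero_right)+
  have x0g: "x0*g = x0" by (metis x0h(2) gh(2) mult.assoc)
  have bW: "b*W = y0 + x0*w" unfolding W_def bdec[folded y0_def] using y0 y0w x0h gh x0g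
    by (simp add: algebra_simps)
  have yx: "y0*x0 = 0" by (metis y0(2) x0h(1) mult.assoc mult_zero_left)
  have xwx: "x0*(w*x0) = x0" using w(2) by (simp add: mult.assoc)
  have "b*W*b = (y0 + x0*w)*b" using bW by simp
  also have "\<dots> = (y0 + x0*w)*(y0+x0)" using bdec[folded y0_def] by simp
  also have "\<dots> = y0 + x0" using y0(1) yx y0w(2) xwx by (simp add: algebra_simps)
  finally have "b*W*b = b" using bdec[folded y0_def] by simp
  moreover have "is_unit_in (corner g UNIV) g W" unfolding is_unit_in_def
    using WW Wc corner_UNIV[OF gg, of W] corner_UNIV[OF gg, of W'] by blast
  ultimately show ?thesis by blast
qed


lemma URT:
  fixes smult :: "'k::field \<Rightarrow> 'a::ring \<Rightarrow> 'a" and smultQ :: "'k \<Rightarrow> 'q::ring \<Rightarrow> 'q"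
    and p :: "'a \<Rightarrow> 'q" and J :: "'a set"
  assumes K: "k_algebra smult" and KQ: "k_algebra smultQ" and J: "alg_ideal smult J"
    and P: "quotient_map smult smultQ p J"
    and LJ: "locally_unit_regular smult J" and LQ: "locally_unit_regular smultQ (UNIV :: 'q set)"
    and R: "reg (UNIV::'a set)" and gg: "g*g = g"
    and H: "\<forall>x\<in>corner g UNIV.
          (\<exists>y\<in>corner g UNIV. x * y - g \<in> corner g J \<and> y * x - g \<in> corner g J) \<longrightarrow>
          (\<exists>u. is_unit_in (corner g UNIV) g u \<and> u - x \<in> corner g J)"
  shows "UR (corner g UNIV) g"
  unfolding UR_def
proof
  fix a assume "a \<in> corner g UNIV"
  then have gag: "g*a*g = a" using corner_UNIV[OF gg] by blast
  note hom = qm_mult[OF P] qm_add[OF P] qm_diff[OF P]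
  have RJ: "reg J" using lur_reg[OF LJ] .
  obtain S where S: "subalgebra smultQ S" "{p a, p g} \<subseteq> S" "unit_regular_with_identity S"
    using LQ unfolding locally_unit_regular_def by (metis finite.emptyI finite_insert subset_UNIV)
  have CS: "closed_ring S" using subalg_closed[OF KQ S(1)] .
  have pS: "p a \<in> S" "p g \<in> S" using S(2) by auto
  have pgg: "p g * p g = p g" using gg hom by metis
  note ct = CT[OF KQ S(1) S(3) pS(2) pgg]
  note cm = corner_mem[OF CS pS(2) pgg]
  have "p g * p a * p g = p a" using gag hom by metis
  then have "p a \<in> corner (p g) S" using cm pS by auto
  then obtain U where U: "is_unit_in (corner (p g) S) (p g) U" "p a * U * p a = p a"
    using ct(3) unfolding UR_def by blast
  then obtain V where V: "U \<in> corner (p g) S" "V \<in> corner (p g) S" "U*V = p g" "V*U = p g"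
    unfolding is_unit_in_def by blast
  have UVc: "p g * U * p g = U" "p g * V * p g = V" using V(1,2) cm by auto
  obtain u0 where u0: "p u0 = U" using qm_surj[OF P] by blast
  obtain v0 where v0: "p v0 = V" using qm_surj[OF P] by blast
  define u1 where "u1 = g*u0*g"
  define v1 where "v1 = g*v0*g"
  have pu1: "p u1 = U" "p v1 = V" unfolding u1_def v1_def using hom u0 v0 UVc by simp_all
  have u1c: "g*u1*g = u1" "g*v1*g = v1" unfolding u1_def v1_def using gg by (metis mult.assoc)+
  have gu: "g*u1 = u1" "u1*g = u1" "g*v1 = v1" "v1*g = v1" using u1c gg by (metis mult.assoc)+
  have "u1*v1 - g \<in> J" "v1*u1 - g \<in> J" using qm_ker[OF P] hom pu1 V(3,4) by simp_all
  moreover have "g*(u1*v1 - g)*g = u1*v1 - g" "g*(v1*u1 - g)*g = v1*u1 - g"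
    using gu gg by (simp_all add: algebra_simps mult.assoc[symmetric] lext[OF gu(4)] lext[OF gu(2)] del: mult.assoc)
  ultimately have "u1*v1 - g \<in> corner g J" "v1*u1 - g \<in> corner g J" using corner_J[OF J gg] by blast+
  moreover have "u1 \<in> corner g UNIV" "v1 \<in> corner g UNIV" using u1c corner_UNIV[OF gg] by blast+
  ultimately obtain u where u: "is_unit_in (corner g UNIV) g u" "u - u1 \<in> corner g J"
    using H by blast
  obtain u' where u': "u \<in> corner g UNIV" "u' \<in> corner g UNIV" "u*u' = g" "u'*u = g"
    using u(1) unfolding is_unit_in_def by blast
  have "u - u1 \<in> J" using u(2) corner_J[OF J gg] by blast
  then have pu: "p u = U" using qm_ker[OF P] hom pu1 by simp
  have ucg: "g*u*g = u" using u'(1) corner_UNIV[OF gg] by blast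
  define b where "b = a*u"
  have gbg: "g*b*g = b" unfolding b_def using gag ucg gg
    by (metis mult.assoc)
  have pbb: "p b * p b = p b" unfolding b_def using hom pu U(2) by (metis mult.assoc)
  obtain f where f: "f*f = f" "g*f*g = f" "p f = p b" using IL[OF P R gg gbg pbb] by blast
  have "b - f \<in> J" using qm_ker[OF P] hom f(3) by simp
  then obtain W where W: "is_unit_in (corner g UNIV) g W" "b*W*b = b"
    using FIX[OF K J RJ LJ gg f(1) f(2) gbg] by blast
  obtain W' where W': "W \<in> corner g UNIV" "W' \<in> corner g UNIV" "W*W' = g" "W'*W = g"
    using W(1) unfolding is_unit_in_def by blast
  have Wc: "g*W*g = W" "g*W'*g = W'" "g*u'*g = u'" using W' u' corner_UNIV[OF gg] by blast+
  have ga: "a*g = a" "g*a = a" using gag gg by (metis mult.assoc)+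
  have gW: "g*W = W" "W*g = W" "g*W' = W'" "W'*g = W'" "g*u = u" "u*g = u" "g*u' = u'" "u'*g = u'"
    using Wc ucg gg by (metis mult.assoc)+
  have "a = b*u'" unfolding b_def using u'(3) ga by (simp add: mult.assoc)
  then have "a*(u*W)*a = a"
    by (metis W(2) b_def mult.assoc)
  moreover have "is_unit_in (corner g UNIV) g (u*W)"
  proof -
    have "(u*W)*(W'*u') = g" using W'(3) u'(3) gW by (metis mult.assoc)
    moreover have "(W'*u')*(u*W) = g" using W'(4) u'(4) gW by (metis mult.assoc)
    moreover have "g*(u*W)*g = u*W" "g*(W'*u')*g = W'*u'" using gW by (metis mult.assoc)+
    ultimately show ?thesis unfolding is_unit_in_def using corner_UNIV[OF gg] by blast
  qed
  ultimately show "\<exists>u. is_unit_in (corner g UNIV) g u \<and> a*u*a = a" by blast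
qed



theorem proposition5p3:
  fixes smult :: "'k::field \<Rightarrow> 'a::ring \<Rightarrow> 'a"
    and smultQ :: "'k \<Rightarrow> 'q::ring \<Rightarrow> 'q"
    and p :: "'a \<Rightarrow> 'q"
    and J :: "'a set"
  assumes "k_algebra smult"
    and "k_algebra smultQ"
    and "alg_ideal smult J"
    and "quotient_map smult smultQ p J"
    and "locally_unit_regular smult J"
    and "locally_unit_regular smultQ (UNIV :: 'q set)"
  shows "locally_unit_regular smult (UNIV :: 'a set) \<longleftrightarrow>
    (\<forall>e. e * e = e \<longrightarrow>
       (\<forall>x\<in>corner e UNIV.
          (\<exists>y\<in>corner e UNIV. x * y - e \<in> corner e J \<and> y * x - e \<in> corner e J) \<longrightarrow>
          (\<exists>u. is_unit_in (corner e UNIV) e u \<and> u - x \<in> corner e J)))"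
proof
  assume L: "locally_unit_regular smult (UNIV :: 'a set)"
  show "\<forall>e. e * e = e \<longrightarrow>
       (\<forall>x\<in>corner e UNIV.
          (\<exists>y\<in>corner e UNIV. x * y - e \<in> corner e J \<and> y * x - e \<in> corner e J) \<longrightarrow>
          (\<exists>u. is_unit_in (corner e UNIV) e u \<and> u - x \<in> corner e J))"
    using dir1[OF assms(1) assms(3) assms(4) L] by blast
next
  assume H: "\<forall>e. e * e = e \<longrightarrow>
       (\<forall>x\<in>corner e UNIV.
          (\<exists>y\<in>corner e UNIV. x * y - e \<in> corner e J \<and> y * x - e \<in> corner e J) \<longrightarrow>
          (\<exists>u. is_unit_in (corner e UNIV) e u \<and> u - x \<in> corner e J))"
  have R: "reg (UNIV::'a set)"
    using reg_ext[OF assms(4) lur_reg[OF assms(5)] lur_reg[OF assms(6)]] .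
  have M: "module smult" using kalg_module[OF assms(1)] .
  have SU: "subalgebra smult (UNIV::'a set)"
    unfolding subalgebra_def using module.subspace_UNIV[OF M] by simp
  have CU: "closed_ring (UNIV::'a set)" by (simp add: closed_ring_def)
  show "locally_unit_regular smult (UNIV :: 'a set)"
    unfolding locally_unit_regular_def
  proof (intro allI impI)
    fix F :: "'a set" assume "finite F \<and> F \<subseteq> UNIV"
    then obtain g where g: "g*g = g" "\<forall>x\<in>F. g*x = x \<and> x*g = x" using LOC[OF R] by blast
    have "subalgebra smult (corner g UNIV)" using subalg_corner[OF assms(1) SU _ g(1)] by simp
    moreover have "is_identity (corner g UNIV) g" using corner_closed[OF CU _ g(1)] by simp
    moreover have "UR (corner g UNIV) g"
      using URT[OF assms(1,2,3,4,5,6) R g(1)] H g(1) by blast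
    moreover have "F \<subseteq> corner g UNIV" using g corner_UNIV[OF g(1)] by auto
    ultimately show "\<exists>S. subalgebra smult S \<and> S \<subseteq> UNIV \<and> F \<subseteq> S \<and> unit_regular_with_identity S"
      unfolding URI_iff by blast
  qed
qed


end
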